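(* Let $\alpha>1$. (i) Let $\nu$ be a class (i) or class (ii) distribution with density $f=e^{-\varphi}$, where $f$ is bounded. Let $\eta$ be another distribution with density $g=e^{-\gamma}$. Suppose that $\lim_{x\to\infty}\varphi(x)/\gamma(x)$ exists and that $g/f$ is bounded on every compact interval. Then $\lim_{x\to\infty}\gamma(x)/\varphi(x)>\frac{\alpha-1}{\alpha}$ implies $D_\alpha(\eta|\nu)<\infty$, and $\lim_{x\to\infty}\gamma(x)/\varphi(x)<\frac{\alpha-1}{\alpha}$ implies $D_\alpha(\eta|\nu)=\infty$. (ii) Let $\nu$ be a class (iii) distribution with density $f=e^{-\varphi}$, where $f$ is bounded and $\lim_{x\to\infty}\varphi(x)/\log(x)=c>1$. Let $\eta$ be another distribution with density $g=e^{-\gamma}$. Suppose that $\lim_{x\to\infty}\varphi(x)/\gamma(x)$ exists and that $g/f$ is bounded on every compact interval. Then $\lim_{x\to\infty}\gamma(x)/\varphi(x)>\frac{\alpha-1}{\alpha}+\frac{1}{c\alpha}$ implies $D_\alpha(\eta|\nu)<\infty$, and $\lim_{x\to\infty}\gamma(x)/\varphi(x)<\frac{\alpha-1}{\alpha}+\frac{1}{c\alpha}$ implies $D_\alpha(\eta|\nu)=\infty$.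
   Context: Distributions are probability distributions on $[0,\infty)$ with continuous densities written $f=\exp(-\varphi)$, $g=\exp(-\gamma)$, positive above some threshold. The $\alpha$-divergence ($\alpha>0,\alpha\ne1$) is the $F$-divergence $D_\alpha(\eta|\nu)=\int_0^\infty F(g/f)f\,dx$ with $F(y)=\frac{y^\alpha-1}{\alpha(\alpha-1)}$ (and $+\infty$ if $\eta$ is not absolutely continuous w.r.t. $\nu$). Classes: $\nu$ is class (i) if there is $c>0$ with $\lim_{x\to\infty}\varphi(x)/x>c$. $\nu$ is class (ii) if $\lim_{x\to\infty}\varphi(x)/x=0$, $\lim_{x\to\infty}\varphi(x)/\log x=\infty$, and there exists $\Phi:\mathbb R_+\to\mathbb R$ and $\bar x>0$ such that $\Phi$ is positive, strictly concave, twice differentiable and increasing on $[\bar x,\infty)$, and, with $\Phi^{-1}$ the inverse of $\Phi|_{[\bar x,\infty)}$, $\liminf_{x\to\infty}\Phi^{-1}(\varphi(x))/x>0$ and $\limsup_{x\to\infty}\Phi^{-1}(\varphi(x))/x<\infty$. $\nu$ is class (iii) if $\lim_{x\to\infty}\varphi(x)/\log(x)=c$ for some $c<\infty$. *)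

theory Defs
  imports "HOL-Analysis.Analysis"
begin

text \<open>A distribution on [0,oo) given by a continuous density f, positive above some threshold.
  Values of f on negative reals are irrelevant.\<close>
definition is_density :: "(real \<Rightarrow> real) \<Rightarrow> bool" where
  "is_density f \<longleftrightarrow> continuous_on {0..} f \<and> (\<forall>x\<ge>0. 0 \<le> f x) \<and>
     (f has_integral 1) {0..} \<and> (\<exists>x0. \<forall>x\<ge>x0. 0 < f x)"

text \<open>The potential phi with f = exp(-phi) (meaningful where f > 0).\<close>
definition pot :: "(real \<Rightarrow> real) \<Rightarrow> real \<Rightarrow> real" where
  "pot f x = - ln (f x)"

definition dist_measure :: "(real \<Rightarrow> real) \<Rightarrow> real measure" where
  "dist_measure f = density lborel (\<lambda>x. ennreal (indicator {0..} x * f x))"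

definition F_alpha :: "real \<Rightarrow> real \<Rightarrow> real" where
  "F_alpha a y = (y powr a - 1) / (a * (a - 1))"

text \<open>alpha_div a g f = D_a(eta | nu), where eta has density g and nu has density f.
  The integral of F(g/f) f over [0,oo) is taken as (positive part) - (negative part)
  in the extended reals; it is +oo if eta is not absolutely continuous w.r.t. nu.
  On the set where f = 0 the integrand is 0 (Isabelle: g/0 = 0, times f = 0).\<close>
definition alpha_div :: "real \<Rightarrow> (real \<Rightarrow> real) \<Rightarrow> (real \<Rightarrow> real) \<Rightarrow> ereal" where
  "alpha_div a g f =
    (if absolutely_continuous (dist_measure f) (dist_measure g) then
       enn2ereal (\<integral>\<^sup>+ x\<in>{0..}. ennreal (max 0 (F_alpha a (g x / f x) * f x)) \<partial>lborel)
       - enn2ereal (\<integral>\<^sup>+ x\<in>{0..}. ennreal (max 0 (- (F_alpha a (g x / f x) * f x))) \<partial>lborel)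
     else \<infinity>)"

definition strictly_concave_on :: "real set \<Rightarrow> (real \<Rightarrow> real) \<Rightarrow> bool" where
  "strictly_concave_on S h \<longleftrightarrow>
     (\<forall>x\<in>S. \<forall>y\<in>S. \<forall>t::real. x \<noteq> y \<and> 0 < t \<and> t < 1 \<longrightarrow>
        t * h x + (1 - t) * h y < h (t * x + (1 - t) * y))"

definition class_i :: "(real \<Rightarrow> real) \<Rightarrow> bool" where
  "class_i f \<longleftrightarrow> (\<exists>c>0. \<exists>l::ereal.
     ((\<lambda>x. ereal (pot f x / x)) \<longlongrightarrow> l) at_top \<and> l > ereal c)"

definition class_ii :: "(real \<Rightarrow> real) \<Rightarrow> bool" where
  "class_ii f \<longleftrightarrow>
     ((\<lambda>x. pot f x / x) \<longlongrightarrow> 0) at_top \<and>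
     filterlim (\<lambda>x. pot f x / ln x) at_top at_top \<and>
     (\<exists>(\<Phi>::real \<Rightarrow> real) xbar. xbar > 0 \<and>
        (\<forall>x\<ge>xbar. 0 < \<Phi> x) \<and>
        strictly_concave_on {xbar..} \<Phi> \<and>
        (\<exists>\<Phi>' \<Phi>''. \<forall>x\<ge>xbar. (\<Phi> has_real_derivative \<Phi>' x) (at x within {xbar..}) \<and>
                               (\<Phi>' has_real_derivative \<Phi>'' x) (at x within {xbar..})) \<and>
        mono_on {xbar..} \<Phi> \<and>
        Liminf at_top (\<lambda>x. ereal (the_inv_into {xbar..} \<Phi> (pot f x) / x)) > 0 \<and>
        Limsup at_top (\<lambda>x. ereal (the_inv_into {xbar..} \<Phi> (pot f x) / x)) < \<infinity>)"

definition class_iii :: "(real \<Rightarrow> real) \<Rightarrow> bool" where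
  "class_iii f \<longleftrightarrow> (\<exists>c::real. ((\<lambda>x. pot f x / ln x) \<longlongrightarrow> c) at_top)"

text \<open>g/f bounded on every compact interval of [0,oo) (with g/f = oo where f = 0 < g).\<close>
definition ratio_locally_bounded :: "(real \<Rightarrow> real) \<Rightarrow> (real \<Rightarrow> real) \<Rightarrow> bool" where
  "ratio_locally_bounded g f \<longleftrightarrow>
     (\<forall>a b. 0 \<le> a \<longrightarrow> (\<exists>M. \<forall>x\<in>{a..b}. g x \<le> M * f x))"

end

theory Submission
  imports Defs "HOL-Real_Asymp.Real_Asymp"
begin


lemma I_pos:
  assumes "a > 1" "f x > 0" "g x > 0"
  shows "F_alpha a (g x / f x) * f x = (exp (-(a * pot g x - (a-1) * pot f x)) - f x) / (a*(a-1))"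
proof -
  have "(g x / f x) powr a * f x = exp (a * (ln (g x) - ln (f x)) + ln (f x))"
    using assms by (simp add: powr_def ln_div exp_add)
  also have "\<dots> = exp (-(a * pot g x - (a-1) * pot f x))"
    unfolding pot_def by (simp add: algebra_simps)
  finally show ?thesis unfolding F_alpha_def using assms by (simp add: field_simps)
qed

lemma I_lower:
  assumes "a > 1" "f x \<ge> 0"
  shows "F_alpha a (g x / f x) * f x \<ge> - f x / (a*(a-1))"
proof -
  have "(g x / f x) powr a \<ge> 0" by simp
  hence "F_alpha a (g x / f x) \<ge> -1/(a*(a-1))" unfolding F_alpha_def using assms
    by (simp add: divide_simps)
  hence "F_alpha a (g x / f x) * f x \<ge> (-1/(a*(a-1))) * f x"
    using assms mult_right_mono by blast
  thus ?thesis by simp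
qed

lemma meas_dens:
  assumes "is_density f"
  shows "(\<lambda>x. ennreal (indicator {0..} x * f x)) \<in> borel_measurable borel"
proof -
  have "(\<lambda>x. indicator {0::real..} x *\<^sub>R f x) \<in> borel_measurable borel"
    using assms unfolding is_density_def by (intro borel_measurable_continuous_on_indicator) auto
  thus ?thesis by (simp add: measurable_compose[OF _ measurable_ennreal])
qed

lemma abs_cont:
  assumes "is_density f" "is_density g" "ratio_locally_bounded g f"
  shows "absolutely_continuous (dist_measure f) (dist_measure g)"
proof -
  have mf: "(\<lambda>x. ennreal (indicator {0..} x * f x)) \<in> borel_measurable lborel"
    using meas_dens[OF assms(1)] by simp
  have mg: "(\<lambda>x. ennreal (indicator {0..} x * g x)) \<in> borel_measurable lborel"
    using meas_dens[OF assms(2)] by simp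
  have pt: "ennreal (indicator {0..} x * g x) = 0" if "ennreal (indicator {0..} x * f x) = 0" for x
  proof (cases "x \<ge> 0")
    case True
    obtain M where M: "\<forall>y\<in>{0..x}. g y \<le> M * f y" using assms(3) unfolding ratio_locally_bounded_def by blast
    have "f x \<ge> 0" "g x \<ge> 0" using assms(1,2) True unfolding is_density_def by auto
    with that True have "f x = 0" by (simp add: indicator_def)
    with M True have "g x \<le> 0" by (metis atLeastAtMost_iff mult_zero_right order_refl)
    with \<open>g x \<ge> 0\<close> show ?thesis by simp
  qed (simp add: indicator_def)
  show ?thesis
    unfolding absolutely_continuous_def dist_measure_def
  proof
    fix A assume "A \<in> null_sets (density lborel (\<lambda>x. ennreal (indicator {0..} x * f x)))"
    hence "A \<in> sets lborel" "AE x in lborel. x \<in> A \<longrightarrow> ennreal (indicator {0..} x * f x) = 0"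
      using null_sets_density_iff[OF mf] by auto
    thus "A \<in> null_sets (density lborel (\<lambda>x. ennreal (indicator {0..} x * g x)))"
      using null_sets_density_iff[OF mg] pt by (auto elim!: eventually_mono)
  qed
qed

lemma negfin:
  assumes "a > 1" "is_density f"
  shows "(\<integral>\<^sup>+ x\<in>{0..}. ennreal (max 0 (- (F_alpha a (g x / f x) * f x))) \<partial>lborel) \<le> ennreal (1/(a*(a-1)))"
proof -
  have fi: "(f has_integral 1) {0..}" and fnn: "\<And>x. x \<ge> 0 \<Longrightarrow> f x \<ge> 0"
    using assms(2) unfolding is_density_def by auto
  have hi: "((\<lambda>x. f x / (a*(a-1))) has_integral (1/(a*(a-1)))) {0..}"
    using has_integral_divide[OF fi] by simp
  have eq: "(\<integral>\<^sup>+ x. ennreal (f x / (a*(a-1))) * indicator {0..} x \<partial>lborel) = ennreal (1/(a*(a-1)))"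
  proof (rule nn_integral_has_integral_lebesgue'[OF _ hi])
    fix x :: real assume "x \<in> {0..}"
    thus "0 \<le> f x / (a*(a-1))" using fnn assms(1) by simp
  qed
  have le: "(\<integral>\<^sup>+ x\<in>{0..}. ennreal (max 0 (- (F_alpha a (g x / f x) * f x))) \<partial>lborel)
      \<le> (\<integral>\<^sup>+ x. ennreal (f x / (a*(a-1))) * indicator {0..} x \<partial>lborel)"
  proof (rule nn_integral_mono)
    fix x :: real
    show "ennreal (max 0 (- (F_alpha a (g x / f x) * f x))) * indicator {0..} x
          \<le> ennreal (f x / (a*(a-1))) * indicator {0..} x"
    proof (cases "x \<ge> 0")
      case True
      have "- (F_alpha a (g x / f x) * f x) \<le> f x / (a*(a-1))"
        using I_lower[of a f x g, OF assms(1) fnn[OF True]] by linarith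
      moreover have "0 \<le> f x / (a*(a-1))" using fnn[OF True] assms(1) by simp
      ultimately show ?thesis using True by (intro mult_right_mono ennreal_leI) auto
    qed (simp add: indicator_def)
  qed
  show ?thesis using le unfolding eq .
qed

lemma posfin:
  assumes a: "a > 1" and df: "is_density f" and dg: "is_density g" and rb: "ratio_locally_bounded g f"
    and X: "X \<ge> 1" and p: "p > 1"
    and ev: "\<forall>x\<ge>X. 0 < f x \<and> 0 < g x \<and> p * ln x \<le> a * pot g x - (a-1) * pot f x"
  shows "(\<integral>\<^sup>+ x\<in>{0..}. ennreal (max 0 (F_alpha a (g x / f x) * f x)) \<partial>lborel) < \<infinity>"
proof -
  have fi: "(f has_integral 1) {0..}" and fnn: "\<And>x. x \<ge> 0 \<Longrightarrow> f x \<ge> 0"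
    and gnn: "\<And>x. x \<ge> 0 \<Longrightarrow> g x \<ge> 0"
    using df dg unfolding is_density_def by auto
  obtain M where M: "\<forall>x\<in>{0..X}. g x \<le> M * f x" using rb unfolding ratio_locally_bounded_def by blast
  define M' where "M' = max M 0"
  define C where "C = M' powr a / (a*(a-1))"
  define D where "D = 1/(a*(a-1))"
  have C0: "C \<ge> 0" and D0: "D \<ge> 0" using a by (auto simp: C_def D_def)
  define h where "h x = (if x \<in> {0..} then C * f x else 0) + (if x \<in> {X..} then D * x powr (-p) else 0)" for x
  have i1: "((\<lambda>x. if x \<in> {0..} then C * f x else 0) has_integral C) UNIV"
    using has_integral_restrict_UNIV[of "{0..}" "\<lambda>x. C * f x" C] has_integral_mult_right[OF fi, of C] by simp
  have i2: "((\<lambda>x. if x \<in> {X..} then D * x powr (-p) else 0) has_integral (D * (-(X powr (-p+1)) / (-p+1)))) UNIV"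
  proof -
    have "((\<lambda>x. x powr (-p)) has_integral (-(X powr (-p+1)) / (-p+1))) {X..}"
      by (rule has_integral_powr_to_inf) (use p X in auto)
    from has_integral_mult_right[OF this, of D] show ?thesis
      using has_integral_restrict_UNIV[of "{X..}" "\<lambda>x. D * x powr (-p)"] by simp
  qed
  have hi: "(h has_integral (C + D * (-(X powr (-p+1)) / (-p+1)))) UNIV"
    unfolding h_def by (rule has_integral_add[OF i1 i2])
  have hnn: "h x \<ge> 0" for x using C0 D0 fnn unfolding h_def by auto
  have eq: "(\<integral>\<^sup>+ x. ennreal (h x) * indicator UNIV x \<partial>lborel) = ennreal (C + D * (-(X powr (-p+1)) / (-p+1)))"
    by (rule nn_integral_has_integral_lebesgue'[OF _ hi]) (use hnn in auto)
  have "(\<integral>\<^sup>+ x\<in>{0..}. ennreal (max 0 (F_alpha a (g x / f x) * f x)) \<partial>lborel)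
      \<le> (\<integral>\<^sup>+ x. ennreal (h x) * indicator UNIV x \<partial>lborel)"
  proof (rule nn_integral_mono)
    fix x :: real
    have mx: "max 0 (F_alpha a (g x / f x) * f x) \<le> h x" if x0: "x \<ge> 0"
    proof (cases "x \<le> X")
      case True
      have gle: "g x \<le> M * f x" using M True x0 by auto
      have "F_alpha a (g x / f x) * f x \<le> C * f x"
      proof (cases "f x = 0")
        case True thus ?thesis by simp
      next
        case False
        hence fp: "f x > 0" using fnn[OF x0] by simp
        have "g x / f x \<le> M" using gle fp by (simp add: divide_simps)
        hence r: "g x / f x \<le> M'" unfolding M'_def by simp
        have "(g x / f x) powr a \<le> M' powr a"
          by (rule powr_mono2) (use a r gnn[OF x0] fp in auto)
        hence "F_alpha a (g x / f x) \<le> C" unfolding F_alpha_def C_def using a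
          by (simp add: divide_right_mono)
        thus ?thesis using fp mult_right_mono by fastforce
      qed
      moreover have "0 \<le> C * f x" using C0 fnn[OF x0] by simp
      moreover have "C * f x \<le> h x" unfolding h_def using x0 D0 by auto
      ultimately show ?thesis by simp
    next
      case False
      hence xX: "x \<ge> X" "x > 0" using X by auto
      have e: "0 < f x" "0 < g x" "p * ln x \<le> a * pot g x - (a-1) * pot f x" using ev xX by auto
      have "F_alpha a (g x / f x) * f x = (exp (-(a * pot g x - (a-1) * pot f x)) - f x) / (a*(a-1))"
        by (rule I_pos) (use a e in auto)
      also have "\<dots> \<le> exp (-(a * pot g x - (a-1) * pot f x)) / (a*(a-1))"
        using a e by (simp add: divide_right_mono)
      also have "\<dots> \<le> exp (-(p * ln x)) / (a*(a-1))"
        using a e by (intro divide_right_mono) auto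
      also have "exp (-(p * ln x)) = x powr (-p)" using xX by (simp add: powr_def)
      finally have "F_alpha a (g x / f x) * f x \<le> D * x powr (-p)" unfolding D_def by simp
      moreover have "0 \<le> D * x powr (-p)" using D0 by simp
      moreover have "D * x powr (-p) \<le> h x" unfolding h_def using xX C0 fnn[of x] by auto
      ultimately show ?thesis by simp
    qed
    thus "ennreal (max 0 (F_alpha a (g x / f x) * f x)) * indicator {0..} x \<le> ennreal (h x) * indicator UNIV x"
    proof (cases "x \<ge> 0")
      case True
      then show ?thesis using mx by (simp add: ennreal_leI)
    qed simp
  qed
  thus ?thesis using eq by (simp add: order_le_less_trans)
qed

lemma div_fin:
  assumes a: "a > 1" and df: "is_density f" and dg: "is_density g" and rb: "ratio_locally_bounded g f"
    and X: "X \<ge> 1" and p: "p > 1"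
    and ev: "\<forall>x\<ge>X. 0 < f x \<and> 0 < g x \<and> p * ln x \<le> a * pot g x - (a-1) * pot f x"
  shows "alpha_div a g f < \<infinity>"
proof -
  have P: "(\<integral>\<^sup>+ x\<in>{0..}. ennreal (max 0 (F_alpha a (g x / f x) * f x)) \<partial>lborel) < \<infinity>"
    by (rule posfin[OF assms])
  then obtain r where r: "(\<integral>\<^sup>+ x\<in>{0..}. ennreal (max 0 (F_alpha a (g x / f x) * f x)) \<partial>lborel) = ennreal r" "r \<ge> 0"
    by (auto simp: less_top_ennreal infinity_ennreal_def)
  obtain N where N: "N = enn2ereal (\<integral>\<^sup>+ x\<in>{0..}. ennreal (max 0 (- (F_alpha a (g x / f x) * f x))) \<partial>lborel)" by simp
  have N0: "N \<ge> 0" using N by simp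
  have "ereal r - N < \<infinity>" using N0 by (cases N) auto
  thus ?thesis
    unfolding alpha_div_def using abs_cont[OF df dg rb] r N by simp
qed

lemma posinf:
  assumes a: "a > 1" and df: "is_density f" and dg: "is_density g"
    and X: "X \<ge> 1"
    and ev: "\<forall>x\<ge>X. 0 < f x \<and> 0 < g x \<and> f x \<le> 1/x \<and> 2/x \<le> exp (-(a * pot g x - (a-1) * pot f x))"
  shows "(\<integral>\<^sup>+ x\<in>{0..}. ennreal (max 0 (F_alpha a (g x / f x) * f x)) \<partial>lborel) = \<infinity>"
proof -
  let ?P = "(\<integral>\<^sup>+ x\<in>{0..}. ennreal (max 0 (F_alpha a (g x / f x) * f x)) \<partial>lborel)"
  have low: "ennreal ((ln Y - ln X) / (a*(a-1))) \<le> ?P" if Y: "Y \<ge> X" for Y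
  proof -
    have hi: "((\<lambda>x. 1 / x / (a*(a-1))) has_integral (ln Y / (a*(a-1)) - ln X / (a*(a-1)))) {X..Y}"
    proof (rule fundamental_theorem_of_calculus[OF Y])
      fix x assume "x \<in> {X..Y}"
      hence "x > 0" using X by auto
      thus "((\<lambda>x. ln x / (a*(a-1))) has_vector_derivative 1 / x / (a*(a-1))) (at x within {X..Y})"
        using a by (auto intro!: derivative_eq_intros simp flip: has_real_derivative_iff_has_vector_derivative)
    qed
    have eq: "(\<integral>\<^sup>+ x. ennreal (1 / x / (a*(a-1))) * indicator {X..Y} x \<partial>lborel) = ennreal ((ln Y - ln X) / (a*(a-1)))"
    proof -
      have "(\<integral>\<^sup>+ x. ennreal (1 / x / (a*(a-1))) * indicator {X..Y} x \<partial>lborel) = ennreal (ln Y / (a*(a-1)) - ln X / (a*(a-1)))"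
      proof (rule nn_integral_has_integral_lebesgue'[OF _ hi])
        fix x :: real assume "x \<in> {X..Y}"
        thus "0 \<le> 1 / x / (a*(a-1))" using X a by auto
      qed
      thus ?thesis by (simp add: diff_divide_distrib)
    qed
    have "(\<integral>\<^sup>+ x. ennreal (1 / x / (a*(a-1))) * indicator {X..Y} x \<partial>lborel) \<le> ?P"
    proof (rule nn_integral_mono)
      fix x :: real
      show "ennreal (1 / x / (a*(a-1))) * indicator {X..Y} x \<le> ennreal (max 0 (F_alpha a (g x / f x) * f x)) * indicator {0..} x"
      proof (cases "x \<in> {X..Y}")
        case True
        hence xX: "x \<ge> X" "x > 0" "x \<ge> 0" using X by auto
        have e: "0 < f x" "0 < g x" "f x \<le> 1/x" "2/x \<le> exp (-(a * pot g x - (a-1) * pot f x))"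
          using ev xX by auto
        have "F_alpha a (g x / f x) * f x = (exp (-(a * pot g x - (a-1) * pot f x)) - f x) / (a*(a-1))"
          by (rule I_pos) (use a e in auto)
        also have "\<dots> \<ge> (2/x - 1/x) / (a*(a-1))"
          using a e by (intro divide_right_mono) auto
        finally have "(2/x - 1/x) / (a*(a-1)) \<le> F_alpha a (g x / f x) * f x" .
        moreover have "(2/x - 1/x) = 1/x" by simp
        ultimately have "1 / x / (a*(a-1)) \<le> max 0 (F_alpha a (g x / f x) * f x)" by simp
        thus ?thesis using True xX by (simp add: ennreal_leI)
      qed simp
    qed
    thus ?thesis unfolding eq .
  qed
  show ?thesis
  proof (rule ccontr)
    assume ne: "?P \<noteq> \<infinity>"
    obtain r where r: "?P = ennreal r" "r \<ge> 0"
    proof (cases ?P rule: ennreal_cases)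
      case (real r) thus ?thesis using that by blast
    next
      case top thus ?thesis using ne by (simp add: infinity_ennreal_def)
    qed
    define Y where "Y = exp (r*(a*(a-1)) + ln X + 1)"
    have pos: "r*(a*(a-1)) + 1 > 0" using r a by (simp add: add_nonneg_pos)
    have lnY: "ln Y = r*(a*(a-1)) + ln X + 1" unfolding Y_def by simp
    have "X = exp (ln X)" using X by simp
    also have "\<dots> \<le> Y" unfolding Y_def using pos by simp
    finally have YX: "Y \<ge> X" .
    have "ennreal ((ln Y - ln X) / (a*(a-1))) \<le> ennreal r" using low[OF YX] r(1) by simp
    hence "(ln Y - ln X) / (a*(a-1)) \<le> r" using r(2) by (simp add: ennreal_le_iff)
    moreover have "(ln Y - ln X) / (a*(a-1)) = r + 1/(a*(a-1))" unfolding lnY using a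
      by (simp add: field_simps)
    moreover have "1/(a*(a-1)) > 0" using a by simp
    ultimately show False by linarith
  qed
qed

lemma div_inf:
  assumes a: "a > 1" and df: "is_density f" and dg: "is_density g"
    and X: "X \<ge> 1"
    and ev: "\<forall>x\<ge>X. 0 < f x \<and> 0 < g x \<and> f x \<le> 1/x \<and> 2/x \<le> exp (-(a * pot g x - (a-1) * pot f x))"
  shows "alpha_div a g f = \<infinity>"
proof -
  have P: "(\<integral>\<^sup>+ x\<in>{0..}. ennreal (max 0 (F_alpha a (g x / f x) * f x)) \<partial>lborel) = \<infinity>"
    by (rule posinf[OF assms])
  have N: "(\<integral>\<^sup>+ x\<in>{0..}. ennreal (max 0 (- (F_alpha a (g x / f x) * f x))) \<partial>lborel) \<le> ennreal (1/(a*(a-1)))"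
    by (rule negfin[OF a df])
  hence "enn2ereal (\<integral>\<^sup>+ x\<in>{0..}. ennreal (max 0 (- (F_alpha a (g x / f x) * f x))) \<partial>lborel) \<noteq> \<infinity>"
    using order_le_less_trans[OF N ennreal_less_top] by (simp add: infinity_ennreal_def)
  thus ?thesis unfolding alpha_div_def using P by simp
qed

lemma ev_dens: "is_density f \<Longrightarrow> eventually (\<lambda>x. 0 < f x) at_top"
  unfolding is_density_def eventually_at_top_linorder by blast

lemma core_fin:
  assumes a: "a > 1" and df: "is_density f" and dg: "is_density g" and rb: "ratio_locally_bounded g f"
    and c0: "c0 > 0" and p: "(a*t' - a + 1) * c0 > 1"
    and ev: "eventually (\<lambda>x. c0 * ln x \<le> pot f x \<and> t' < pot g x / pot f x) at_top"
  shows "alpha_div a g f < \<infinity>"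
proof -
  define k where "k = a*t' - a + 1"
  have k: "k > 0" using p c0 unfolding k_def by (smt (verit) zero_less_mult_iff)
  have "eventually (\<lambda>x. (c0 * ln x \<le> pot f x \<and> t' < pot g x / pot f x) \<and> (0 < f x \<and> 0 < g x) \<and> x \<ge> 2) at_top"
    using eventually_conj[OF ev eventually_conj[OF eventually_conj[OF ev_dens[OF df] ev_dens[OF dg]] eventually_ge_at_top[of 2]]] .
  then obtain X where X: "\<And>x. x \<ge> X \<Longrightarrow> (c0 * ln x \<le> pot f x \<and> t' < pot g x / pot f x) \<and> (0 < f x \<and> 0 < g x) \<and> x \<ge> 2"
    unfolding eventually_at_top_linorder by blast
  show ?thesis
  proof (rule div_fin[OF a df dg rb _ p[folded k_def]])
    show "max X 1 \<ge> 1" by simp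
    show "\<forall>x\<ge>max X 1. 0 < f x \<and> 0 < g x \<and> k * c0 * ln x \<le> a * pot g x - (a-1) * pot f x"
    proof (intro allI impI)
      fix x assume "max X 1 \<le> x"
      hence h: "c0 * ln x \<le> pot f x" "t' < pot g x / pot f x" "0 < f x" "0 < g x" "x \<ge> 2" using X by auto
      have lx: "ln x > 0" using h(5) by simp
      have phi: "pot f x > 0" using h(1) c0 lx by (smt (verit) mult_pos_pos)
      have "t' * pot f x < pot g x" using h(2) phi by (simp add: pos_less_divide_eq)
      hence "k * pot f x \<le> a * pot g x - (a-1) * pot f x" unfolding k_def using a
        by (simp add: algebra_simps)
      moreover have "k * (c0 * ln x) \<le> k * pot f x" using h(1) k by simp
      ultimately show "0 < f x \<and> 0 < g x \<and> k * c0 * ln x \<le> a * pot g x - (a-1) * pot f x"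
        using h by (simp add: mult.assoc)
    qed
  qed
qed

lemma core_inf:
  assumes a: "a > 1" and df: "is_density f" and dg: "is_density g"
    and ev: "eventually (\<lambda>x. ln x \<le> pot f x \<and> pot g x / pot f x < t' \<and> (a*t' - a + 1) * pot f x \<le> ln x - ln 2) at_top"
  shows "alpha_div a g f = \<infinity>"
proof -
  define k where "k = a*t' - a + 1"
  have "eventually (\<lambda>x. (ln x \<le> pot f x \<and> pot g x / pot f x < t' \<and> k * pot f x \<le> ln x - ln 2) \<and> (0 < f x \<and> 0 < g x) \<and> x \<ge> 2) at_top"
    using eventually_conj[OF ev eventually_conj[OF eventually_conj[OF ev_dens[OF df] ev_dens[OF dg]] eventually_ge_at_top[of 2]]] unfolding k_def .
  then obtain X where X: "\<And>x. x \<ge> X \<Longrightarrow> (ln x \<le> pot f x \<and> pot g x / pot f x < t' \<and> k * pot f x \<le> ln x - ln 2) \<and> (0 < f x \<and> 0 < g x) \<and> x \<ge> 2"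
    unfolding eventually_at_top_linorder by blast
  show ?thesis
  proof (rule div_inf[OF a df dg])
    show "max X 1 \<ge> 1" by simp
    show "\<forall>x\<ge>max X 1. 0 < f x \<and> 0 < g x \<and> f x \<le> 1/x \<and> 2/x \<le> exp (-(a * pot g x - (a-1) * pot f x))"
    proof (intro allI impI)
      fix x assume "max X 1 \<le> x"
      hence h: "ln x \<le> pot f x" "pot g x / pot f x < t'" "k * pot f x \<le> ln x - ln 2" "0 < f x" "0 < g x" "x \<ge> 2" using X by auto
      have lx: "ln x > 0" using h(6) by simp
      have phi: "pot f x > 0" using h(1) lx by simp
      have "pot g x < t' * pot f x" using h(2) phi by (simp add: pos_divide_less_eq)
      hence "a * pot g x - (a-1) * pot f x < k * pot f x" unfolding k_def using a
        by (simp add: algebra_simps)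
      hence le: "a * pot g x - (a-1) * pot f x \<le> ln x - ln 2" using h(3) by simp
      have "2/x = exp (-(ln x - ln 2))" using h(6) by (simp add: exp_diff)
      also have "\<dots> \<le> exp (-(a * pot g x - (a-1) * pot f x))"
        by (subst exp_le_cancel_iff) (use le in linarith)
      finally have e1: "2/x \<le> exp (-(a * pot g x - (a-1) * pot f x))" .
      have "f x = exp (- pot f x)" using h(4) unfolding pot_def by simp
      also have "\<dots> \<le> exp (- ln x)" using h(1) by simp
      also have "exp (- ln x) = 1/x" using h(6) by (simp add: exp_minus inverse_eq_divide)
      finally have e2: "f x \<le> 1/x" .
      show "0 < f x \<and> 0 < g x \<and> f x \<le> 1/x \<and> 2/x \<le> exp (-(a * pot g x - (a-1) * pot f x))"
        using h e1 e2 by simp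
    qed
  qed
qed

lemma ev_lower:
  assumes lim: "((\<lambda>x. ereal (u x)) \<longlongrightarrow> l) at_top" and lt: "ereal t < l"
  shows "\<exists>t'>t. eventually (\<lambda>x. t' < u x) at_top"
proof -
  obtain z where z: "ereal t < ereal z" "ereal z < l" using ereal_dense2[OF lt] by blast
  have "eventually (\<lambda>x. ereal z < ereal (u x)) at_top" by (rule order_tendstoD(1)[OF lim z(2)])
  hence "eventually (\<lambda>x. z < u x) at_top" by simp
  thus ?thesis using z(1) by auto
qed

lemma ev_upper:
  assumes lim: "((\<lambda>x. ereal (u x)) \<longlongrightarrow> l) at_top" and lt: "l < ereal t"
  shows "\<exists>t'<t. eventually (\<lambda>x. u x < t') at_top"
proof -
  obtain z where z: "l < ereal z" "ereal z < ereal t" using ereal_dense2[OF lt] by blast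
  have "eventually (\<lambda>x. ereal (u x) < ereal z) at_top" by (rule order_tendstoD(2)[OF lim z(1)])
  hence "eventually (\<lambda>x. u x < z) at_top" by simp
  thus ?thesis using z(2) by auto
qed

lemma class_lower:
  assumes "class_i f \<or> class_ii f"
  shows "eventually (\<lambda>x. K * ln x \<le> pot f x) at_top"
  using assms
proof
  assume "class_i f"
  then obtain c l where c: "c > 0" "((\<lambda>x. ereal (pot f x / x)) \<longlongrightarrow> l) at_top" "l > ereal c"
    unfolding class_i_def by blast
  have e1: "eventually (\<lambda>x. ereal c < ereal (pot f x / x)) at_top" by (rule order_tendstoD(1)[OF c(2) c(3)])
  have e2: "eventually (\<lambda>x. (\<bar>K\<bar> + 1) * ln x < c * x) at_top" using c(1) by real_asymp
  show ?thesis using e1 e2 eventually_ge_at_top[of 1]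
  proof eventually_elim
    case (elim x)
    hence "c * x < pot f x" by (simp add: pos_less_divide_eq mult.commute)
    moreover have "K * ln x \<le> (\<bar>K\<bar> + 1) * ln x" using elim(3) by (intro mult_right_mono) auto
    ultimately show ?case using elim(2) by linarith
  qed
next
  assume "class_ii f"
  hence "filterlim (\<lambda>x. pot f x / ln x) at_top at_top" unfolding class_ii_def by blast
  hence e1: "eventually (\<lambda>x. K \<le> pot f x / ln x) at_top" by (simp add: filterlim_at_top)
  show ?thesis using e1 eventually_gt_at_top[of 1]
  proof eventually_elim
    case (elim x)
    hence "ln x > 0" by simp
    thus ?case using elim(1) by (simp add: pos_le_divide_eq)
  qed
qed

lemma part1:
  assumes a: "a > 1" and df: "is_density f" and dg: "is_density g" and cl: "class_i f \<or> class_ii f"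
  and lim: "((\<lambda>x. ereal (pot g x / pot f x)) \<longlongrightarrow> l) at_top"
  shows "(l > ereal ((a - 1) / a) \<longrightarrow> ratio_locally_bounded g f \<longrightarrow> alpha_div a g f < \<infinity>) \<and>
         (l < ereal ((a - 1) / a) \<longrightarrow> alpha_div a g f = \<infinity>)"
proof (intro conjI impI)
  assume lt: "l > ereal ((a - 1) / a)" and rb: "ratio_locally_bounded g f"
  obtain t' where t': "t' > (a-1)/a" "eventually (\<lambda>x. t' < pot g x / pot f x) at_top"
    using ev_lower[OF lim lt] by blast
  define k where "k = a*t' - a + 1"
  have "a - 1 < t' * a" using t'(1) a by (simp add: divide_less_eq)
  hence k: "k > 0" unfolding k_def by (simp add: algebra_simps)
  show "alpha_div a g f < \<infinity>"
  proof (rule core_fin[OF a df dg rb, of "2/k" t'])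
    show "2/k > 0" using k by simp
    show "(a*t' - a + 1) * (2/k) > 1" using k unfolding k_def[symmetric] by simp
    show "eventually (\<lambda>x. 2/k * ln x \<le> pot f x \<and> t' < pot g x / pot f x) at_top"
      using class_lower[OF cl, of "2/k"] t'(2) by (rule eventually_conj)
  qed
next
  assume lt: "l < ereal ((a - 1) / a)"
  obtain t' where t': "t' < (a-1)/a" "eventually (\<lambda>x. pot g x / pot f x < t') at_top"
    using ev_upper[OF lim lt] by blast
  define k where "k = a*t' - a + 1"
  have "t' * a < a - 1" using t'(1) a by (simp add: less_divide_eq)
  hence k: "k < 0" unfolding k_def by (simp add: algebra_simps)
  show "alpha_div a g f = \<infinity>"
  proof (rule core_inf[OF a df dg, of t'])
    show "eventually (\<lambda>x. ln x \<le> pot f x \<and> pot g x / pot f x < t' \<and> (a*t' - a + 1) * pot f x \<le> ln x - ln 2) at_top"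
      using class_lower[OF cl, of 1] t'(2) eventually_ge_at_top[of 2]
    proof eventually_elim
      case (elim x)
      have l2: "ln x \<ge> ln 2" using elim(3) by simp
      have "ln x \<ge> 0" using elim(3) by simp
      hence "pot f x \<ge> 0" using elim(1) by simp
      hence "k * pot f x \<le> 0" using k by (simp add: mult_nonpos_nonneg)
      hence "(a*t' - a + 1) * pot f x \<le> ln x - ln 2" using l2 unfolding k_def by linarith
      thus ?case using elim by simp
    qed
  qed
qed

lemma part2:
  assumes a: "a > 1" and df: "is_density f" and dg: "is_density g"
  and c: "c > 1" and flim: "((\<lambda>x. pot f x / ln x) \<longlongrightarrow> c) at_top"
  and lim: "((\<lambda>x. ereal (pot g x / pot f x)) \<longlongrightarrow> l) at_top"
  shows "(l > ereal ((a - 1) / a + 1 / (c * a)) \<longrightarrow> ratio_locally_bounded g f \<longrightarrow> alpha_div a g f < \<infinity>) \<and>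
         (l < ereal ((a - 1) / a + 1 / (c * a)) \<longrightarrow> alpha_div a g f = \<infinity>)"
proof (intro conjI impI)
  have aux: "a * ((a - 1) / a + 1 / (c * a)) = a - 1 + 1/c" using a c by (simp add: field_simps)
  assume lt: "l > ereal ((a - 1) / a + 1 / (c * a))" and rb: "ratio_locally_bounded g f"
  obtain t' where t': "t' > (a - 1) / a + 1 / (c * a)" "eventually (\<lambda>x. t' < pot g x / pot f x) at_top"
    using ev_lower[OF lim lt] by blast
  define k where "k = a*t' - a + 1"
  have "a * ((a - 1) / a + 1 / (c * a)) < a * t'" using t'(1) a by simp
  hence k1: "k > 1/c" unfolding aux k_def by simp
  have c0: "1/c > 0" using c by simp
  hence k: "k > 0" using k1 by linarith
  define c' where "c' = (1/k + c)/2"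
  have "1/k < c" using k1 k c by (simp add: field_simps)
  hence c'1: "1/k < c'" "c' < c" unfolding c'_def by auto
  have c'0: "c' > 0" using c'1 k by (smt (verit) divide_pos_pos)
  show "alpha_div a g f < \<infinity>"
  proof (rule core_fin[OF a df dg rb, of c' t'])
    show "c' > 0" by (rule c'0)
    show "(a*t' - a + 1) * c' > 1" unfolding k_def[symmetric] using c'1(1) k by (simp add: divide_less_eq mult.commute)
    have e: "eventually (\<lambda>x. c' < pot f x / ln x) at_top" by (rule order_tendstoD(1)[OF flim c'1(2)])
    show "eventually (\<lambda>x. c' * ln x \<le> pot f x \<and> t' < pot g x / pot f x) at_top"
      using e t'(2) eventually_gt_at_top[of 1]
    proof eventually_elim
      case (elim x)
      hence "ln x > 0" by simp
      hence "c' * ln x < pot f x" using elim(1) by (simp add: pos_less_divide_eq)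
      thus ?case using elim by simp
    qed
  qed
next
  have aux: "a * ((a - 1) / a + 1 / (c * a)) = a - 1 + 1/c" using a c by (simp add: field_simps)
  assume lt: "l < ereal ((a - 1) / a + 1 / (c * a))"
  obtain t' where t': "t' < (a - 1) / a + 1 / (c * a)" "eventually (\<lambda>x. pot g x / pot f x < t') at_top"
    using ev_upper[OF lim lt] by blast
  define k where "k = a*t' - a + 1"
  have "a * t' < a * ((a - 1) / a + 1 / (c * a))" using t'(1) a by simp
  hence k1: "k < 1/c" unfolding aux k_def by simp
  obtain c'' where c'': "c'' > c" "k * c'' < 1"
  proof (cases "k \<le> 0")
    case True
    hence "k * (c+1) \<le> 0" using c by (simp add: mult_nonpos_nonneg)
    thus ?thesis using that[of "c+1"] by simp
  next
    case False
    hence "c < 1/k" using k1 c by (simp add: field_simps)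
    moreover have "k * ((c + 1/k)/2) < 1" using False k1 c calculation by (simp add: field_simps)
    ultimately show ?thesis using that[of "(c + 1/k)/2"] by simp
  qed
  have d: "1 - k * c'' > 0" using c'' by simp
  have e1: "eventually (\<lambda>x. pot f x / ln x < c'') at_top" by (rule order_tendstoD(2)[OF flim c''(1)])
  have e2: "eventually (\<lambda>x. 1 < pot f x / ln x) at_top" by (rule order_tendstoD(1)[OF flim c])
  have e3: "eventually (\<lambda>x. ln 2 / (1 - k * c'') \<le> ln x) at_top"
    using ln_at_top by (simp add: filterlim_at_top)
  show "alpha_div a g f = \<infinity>"
  proof (rule core_inf[OF a df dg, of t'])
    show "eventually (\<lambda>x. ln x \<le> pot f x \<and> pot g x / pot f x < t' \<and> (a*t' - a + 1) * pot f x \<le> ln x - ln 2) at_top"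
      using e1 e2 e3 t'(2) eventually_ge_at_top[of 2]
    proof eventually_elim
      case (elim x)
      have lx: "ln x > 0" using elim(5) by simp
      have l2: "ln x \<ge> ln 2" using elim(5) by simp
      have p1: "ln x < pot f x" using elim(2) lx by (simp add: pos_less_divide_eq)
      have p2: "pot f x < c'' * ln x" using elim(1) lx by (simp add: pos_divide_less_eq)
      have "k * pot f x \<le> ln x - ln 2"
      proof (cases "k \<le> 0")
        case True
        hence "k * pot f x \<le> 0" using p1 lx by (simp add: mult_nonpos_nonneg)
        thus ?thesis using l2 by simp
      next
        case False
        hence "k * pot f x \<le> k * (c'' * ln x)" using p2 by simp
        moreover have "ln 2 \<le> (1 - k * c'') * ln x" using elim(3) d by (simp add: pos_divide_le_eq mult.commute)
        ultimately show ?thesis by (simp add: algebra_simps)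
      qed
      thus ?case using p1 elim(4) unfolding k_def by simp
    qed
  qed
qed


theorem proposition3p3:
  fixes \<alpha> :: real
  assumes "\<alpha> > 1"
  shows
   "(\<forall>f g. is_density f \<and> (class_i f \<or> class_ii f) \<and> (\<exists>M. \<forall>x\<ge>0. f x \<le> M) \<and>
        is_density g \<and>
        (\<exists>L::ereal. ((\<lambda>x. ereal (pot f x / pot g x)) \<longlongrightarrow> L) at_top) \<and>
        ratio_locally_bounded g f \<longrightarrow>
        (\<forall>l::ereal. ((\<lambda>x. ereal (pot g x / pot f x)) \<longlongrightarrow> l) at_top \<longrightarrow>
           (l > ereal ((\<alpha> - 1) / \<alpha>) \<longrightarrow> alpha_div \<alpha> g f < \<infinity>) \<and>
           (l < ereal ((\<alpha> - 1) / \<alpha>) \<longrightarrow> alpha_div \<alpha> g f = \<infinity>)))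
    \<and>
    (\<forall>f g (c::real). is_density f \<and> class_iii f \<and> ((\<lambda>x. pot f x / ln x) \<longlongrightarrow> c) at_top \<and> c > 1 \<and>
        (\<exists>M. \<forall>x\<ge>0. f x \<le> M) \<and>
        is_density g \<and>
        (\<exists>L::ereal. ((\<lambda>x. ereal (pot f x / pot g x)) \<longlongrightarrow> L) at_top) \<and>
        ratio_locally_bounded g f \<longrightarrow>
        (\<forall>l::ereal. ((\<lambda>x. ereal (pot g x / pot f x)) \<longlongrightarrow> l) at_top \<longrightarrow>
           (l > ereal ((\<alpha> - 1) / \<alpha> + 1 / (c * \<alpha>)) \<longrightarrow> alpha_div \<alpha> g f < \<infinity>) \<and>
           (l < ereal ((\<alpha> - 1) / \<alpha> + 1 / (c * \<alpha>)) \<longrightarrow> alpha_div \<alpha> g f = \<infinity>)))"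
proof (intro conjI allI impI)
  fix f g l
  assume h: "is_density f \<and> (class_i f \<or> class_ii f) \<and> (\<exists>M. \<forall>x\<ge>0. f x \<le> M) \<and>
        is_density g \<and>
        (\<exists>L::ereal. ((\<lambda>x. ereal (pot f x / pot g x)) \<longlongrightarrow> L) at_top) \<and>
        ratio_locally_bounded g f"
    and lim: "((\<lambda>x. ereal (pot g x / pot f x)) \<longlongrightarrow> l) at_top"
  note P = part1[OF assms _ _ _ lim, of] h
  { assume "l > ereal ((\<alpha> - 1) / \<alpha>)"
    thus "alpha_div \<alpha> g f < \<infinity>" using P by blast }
  { assume "l < ereal ((\<alpha> - 1) / \<alpha>)"
    thus "alpha_div \<alpha> g f = \<infinity>" using P by blast }
next
  fix f g l and c :: real
  assume h: "is_density f \<and> class_iii f \<and> ((\<lambda>x. pot f x / ln x) \<longlongrightarrow> c) at_top \<and> c > 1 \<and>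
        (\<exists>M. \<forall>x\<ge>0. f x \<le> M) \<and>
        is_density g \<and>
        (\<exists>L::ereal. ((\<lambda>x. ereal (pot f x / pot g x)) \<longlongrightarrow> L) at_top) \<and>
        ratio_locally_bounded g f"
    and lim: "((\<lambda>x. ereal (pot g x / pot f x)) \<longlongrightarrow> l) at_top"
  note P = part2[OF assms _ _ _ _ lim, of] h
  { assume "l > ereal ((\<alpha> - 1) / \<alpha> + 1 / (c * \<alpha>))"
    thus "alpha_div \<alpha> g f < \<infinity>" using P by blast }
  { assume "l < ereal ((\<alpha> - 1) / \<alpha> + 1 / (c * \<alpha>))"
    thus "alpha_div \<alpha> g f = \<infinity>" using P by blast }
qed

end
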